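(* Let $g$ be a partial function from $X^M$ to a set $Y$. Then there are a hereditarily thrifty partial function $g'\subseteq g$ and a partial function $h$ from $X^M$ to $X^M$ in $\mathscr C_I$ such that $g=g'\circ h$. In particular, if $Y=X$ and $g\in\mathscr C_J$, then $g'\in\mathscr C_J$, so every (partial) $\mathscr C_J$-function is the composition of a hereditarily thrifty $\mathscr C_J$-function with a $\mathscr C_I$-function.
   Context: $X=\omega\times\omega$, elements $(a|b)$ ($x$-coordinate $a$, $y$-coordinate $b$); $M=\{1,\dots,m\}$. Width of $Y\subseteq X$: $\sup_n|Y\cap(\omega\times\{n\})|$; $I$ = ideal of subsets of $X$ of finite width; $J$ = ideal of subsets of $X$ meeting each line $\omega\times\{n\}$ in a finite set. For an ideal $K$, $\mathscr C_K$ is the set of finitary operations $f:X^n\to X$ with $f[A^n]\in K$ for all $A\in K$; a partial function from $X^M$ to $X$ is in $\mathscr C_K$ iff it has a total extension in $\mathscr C_K$, and a partial function from $X^M$ to $X^M$ is in $\mathscr C_K$ iff each component is. For a finite index set $N$, $B^N_k=\{u\in X^N:\exists i\in N\,((u_i)^y<k)\}$; bounded = contained in some $B^N_k$; a partial $p$ from $X^N$ to $Y$ is thrifty iff $p^{-1}[d]$ is bounded for all $d\in Y$. For $S\subseteq M$, $T=M\setminus S$, $c\in X^S$: $p_{\cup c}(z)=p(z\cup c)$ for $z\in X^T$. A partial $p$ from $X^M$ to $Y$ is hereditarily thrifty iff $p_{\cup c}$ is thrifty for every proper subset $S\subsetneq M$ and every $c\in X^S$. Composition of partial functions: $(g'\circ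 h)(u)$ defined iff $h(u)$ defined and in $\operatorname{dom}(g')$. *)

theory Defs
  imports Main "HOL-Library.FuncSet"
begin

type_synonym pt = "nat \<times> nat"   (* (a|b) = (a,b); x-coordinate fst, y-coordinate snd *)
type_synonym tup = "nat \<Rightarrow> pt"  (* elements of X^N, extensional: undefined outside N *)

definition Mset :: "nat \<Rightarrow> nat set" where "Mset m = {1..m}"

definition XN :: "nat set \<Rightarrow> tup set" where "XN N = PiE N (\<lambda>_. UNIV)"

definition hline :: "nat \<Rightarrow> pt set" where "hline n = {p. snd p = n}"

definition I_ideal :: "pt set set" where
  "I_ideal = {A. \<exists>k::nat. \<forall>n. finite (A \<inter> hline n) \<and> card (A \<inter> hline n) \<le> k}"

definition J_ideal :: "pt set set" where
  "J_ideal = {A. \<forall>n. finite (A \<inter> hline n)}"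

definition op_in_C :: "pt set set \<Rightarrow> nat set \<Rightarrow> (tup \<Rightarrow> pt) \<Rightarrow> bool" where
  "op_in_C K N F \<longleftrightarrow> (\<forall>A\<in>K. F ` (PiE N (\<lambda>_. A)) \<in> K)"

definition pfun_in_C :: "pt set set \<Rightarrow> nat set \<Rightarrow> (tup \<Rightarrow> pt option) \<Rightarrow> bool" where
  "pfun_in_C K N p \<longleftrightarrow> (\<exists>F. op_in_C K N F \<and> (\<forall>u\<in>XN N. \<forall>y. p u = Some y \<longrightarrow> F u = y))"

definition pvec_in_C :: "pt set set \<Rightarrow> nat set \<Rightarrow> (tup \<Rightarrow> tup option) \<Rightarrow> bool" where
  "pvec_in_C K N h \<longleftrightarrow> (\<forall>i\<in>N. pfun_in_C K N (\<lambda>u. map_option (\<lambda>v. v i) (h u)))"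

definition Bk :: "nat set \<Rightarrow> nat \<Rightarrow> tup set" where
  "Bk N k = {u \<in> XN N. \<exists>i\<in>N. snd (u i) < k}"

definition bounded_set :: "nat set \<Rightarrow> tup set \<Rightarrow> bool" where
  "bounded_set N A \<longleftrightarrow> (\<exists>k. A \<subseteq> Bk N k)"

definition thrifty :: "nat set \<Rightarrow> (tup \<Rightarrow> 'y option) \<Rightarrow> bool" where
  "thrifty N p \<longleftrightarrow> (\<forall>d. bounded_set N {u. p u = Some d})"

definition p_cup :: "nat set \<Rightarrow> (tup \<Rightarrow> 'y option) \<Rightarrow> nat set \<Rightarrow> tup \<Rightarrow> tup \<Rightarrow> 'y option" where
  "p_cup M p S c = (\<lambda>z. if z \<in> XN (M - S) then p (\<lambda>i. if i \<in> S then c i else z i) else None)"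

definition hered_thrifty :: "nat set \<Rightarrow> (tup \<Rightarrow> 'y option) \<Rightarrow> bool" where
  "hered_thrifty M p \<longleftrightarrow>
     (\<forall>S c. S \<subset> M \<longrightarrow> c \<in> XN S \<longrightarrow> thrifty (M - S) (p_cup M p S c))"

end

theory Submission imports Defs "HOL-Library.Countable_Set" begin

lemma countable_XN: "finite S \<Longrightarrow> countable (XN S)"
proof -
  assume fS: "finite S"
  let ?f = "\<lambda>v::tup. map v (sorted_list_of_set S)"
  have "inj_on ?f (XN S)"
  proof (rule inj_onI)
    fix x y assume x: "x \<in> XN S" and y: "y \<in> XN S" and e: "?f x = ?f y"
    show "x = y"
    proof (rule PiE_ext[OF x[unfolded XN_def] y[unfolded XN_def]])
      fix i assume "i \<in> S"
      then have "i \<in> set (sorted_list_of_set S)" using fS by simp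
      then show "x i = y i" using e by (metis map_eq_conv)
    qed
  qed
  moreover have "countable (?f ` XN S)" by simp
  ultimately show ?thesis by (metis countable_image_inj_on)
qed

lemma I_union_sub:
  assumes "A \<in> I_ideal" "R \<in> I_ideal" "B \<subseteq> A \<union> R"
  shows "B \<in> I_ideal"
proof -
  obtain ka where ka: "\<forall>n. finite (A \<inter> hline n) \<and> card (A \<inter> hline n) \<le> ka" using assms(1) unfolding I_ideal_def by blast
  obtain kr where kr: "\<forall>n. finite (R \<inter> hline n) \<and> card (R \<inter> hline n) \<le> kr" using assms(2) unfolding I_ideal_def by blast
  have "\<forall>n. finite (B \<inter> hline n) \<and> card (B \<inter> hline n) \<le> ka + kr"
  proof
    fix n
    have sub: "B \<inter> hline n \<subseteq> (A \<inter> hline n) \<union> (R \<inter> hline n)" using assms(3) by blast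
    have fin: "finite ((A \<inter> hline n) \<union> (R \<inter> hline n))" using ka kr by blast
    have "card (B \<inter> hline n) \<le> card ((A \<inter> hline n) \<union> (R \<inter> hline n))" by (rule card_mono[OF fin sub])
    also have "\<dots> \<le> card (A \<inter> hline n) + card (R \<inter> hline n)" by (rule card_Un_le)
    also have "\<dots> \<le> ka + kr" using ka kr by (meson add_mono)
    finally show "finite (B \<inter> hline n) \<and> card (B \<inter> hline n) \<le> ka + kr" using finite_subset[OF sub fin] by simp
  qed
  then show ?thesis unfolding I_ideal_def by blast
qed

lemma witness_set:
  fixes P :: "'q \<Rightarrow> tup \<Rightarrow> bool" and T :: "'q \<Rightarrow> nat set"
  assumes cnt: "countable Rq" and fT: "\<forall>q\<in>Rq. finite (T q) \<and> card (T q) \<le> m"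
    and unb: "\<forall>q\<in>Rq. \<forall>N. \<exists>v. P q v \<and> (\<forall>i\<in>T q. N \<le> snd (v i))"
  shows "\<exists>R\<in>I_ideal. \<forall>q\<in>Rq. \<exists>v. P q v \<and> v ` T q \<subseteq> R"
proof (cases "Rq = {}")
  case True
  have "{} \<in> I_ideal" unfolding I_ideal_def by auto
  then show ?thesis using True by blast
next
  case False
  define req where "req = from_nat_into Rq"
  have reqin: "\<And>j. req j \<in> Rq" unfolding req_def using from_nat_into[OF False] by blast
  define wit where "wit N q = (SOME v. P q v \<and> (\<forall>i\<in>T q. N \<le> snd (v i)))" for N q
  have wit: "\<And>N j. P (req j) (wit N (req j)) \<and> (\<forall>i\<in>T (req j). N \<le> snd (wit N (req j) i))"
  proof -
    fix N j
    show "P (req j) (wit N (req j)) \<and> (\<forall>i\<in>T (req j). N \<le> snd (wit N (req j) i))"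
    proof -
      have ex: "\<exists>v. P (req j) v \<and> (\<forall>i\<in>T (req j). N \<le> snd (v i))" using unb reqin by blast
      show ?thesis unfolding wit_def by (rule someI_ex[OF ex])
    qed
  qed
  define bnd where "bnd = rec_nat 0 (\<lambda>j b. b + 1 + (\<Sum>i\<in>T (req j). snd (wit b (req j) i)))"
  have b0: "bnd 0 = 0" and bS: "\<And>j. bnd (Suc j) = bnd j + 1 + (\<Sum>i\<in>T (req j). snd (wit (bnd j) (req j) i))"
    unfolding bnd_def by simp_all
  define Rj where "Rj j = wit (bnd j) (req j) ` T (req j)" for j
  define R where "R = (\<Union>j. Rj j)"
  have inter: "\<And>p j. p \<in> Rj j \<Longrightarrow> bnd j \<le> snd p \<and> snd p < bnd (Suc j)"
  proof -
    fix p j assume "p \<in> Rj j"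
    then obtain i where i: "i \<in> T (req j)" and p: "p = wit (bnd j) (req j) i" unfolding Rj_def by blast
    have "snd p \<le> (\<Sum>i\<in>T (req j). snd (wit (bnd j) (req j) i))"
      unfolding p by (rule member_le_sum) (use i fT reqin in auto)
    then show "bnd j \<le> snd p \<and> snd p < bnd (Suc j)" using wit[of j "bnd j"] i p bS[of j] by auto
  qed
  have smono: "\<And>n. bnd n < bnd (Suc n)" using bS by simp
  have disj: "\<And>p p' j j'. p \<in> Rj j \<Longrightarrow> p' \<in> Rj j' \<Longrightarrow> snd p = snd p' \<Longrightarrow> j = j'"
  proof (rule ccontr)
    fix p p' j j' assume a: "p \<in> Rj j" "p' \<in> Rj j'" "snd p = snd p'" "j \<noteq> j'"
    have le: "\<And>a b. a < b \<Longrightarrow> bnd (Suc a) \<le> bnd b"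
      by (metis Suc_leI lift_Suc_mono_le le_eq_less_or_eq smono less_imp_le)
    show False
    proof (cases "j < j'")
      case True
      then show False using le[OF True] inter[OF a(1)] inter[OF a(2)] a(3) by linarith
    next
      case False
      then have "j' < j" using a(4) by simp
      then show False using le[of j' j] inter[OF a(1)] inter[OF a(2)] a(3) by linarith
    qed
  qed
  have "R \<in> I_ideal" unfolding I_ideal_def
  proof (intro CollectI exI allI)
    fix n
    show "finite (R \<inter> hline n) \<and> card (R \<inter> hline n) \<le> m"
    proof (cases "R \<inter> hline n = {}")
      case True then show ?thesis by simp
    next
      case False
      then obtain p j where p: "p \<in> Rj j" "snd p = n" unfolding R_def hline_def by blast
      have sub: "R \<inter> hline n \<subseteq> Rj j" using disj p unfolding R_def hline_def by blast
      have fin: "finite (Rj j)" unfolding Rj_def using fT reqin by blast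
      have "card (Rj j) \<le> card (T (req j))" unfolding Rj_def by (rule card_image_le) (use fT reqin in blast)
      also have "\<dots> \<le> m" using fT reqin by blast
      finally show ?thesis using card_mono[OF fin sub] finite_subset[OF sub fin] by simp
    qed
  qed
  moreover have "\<forall>q\<in>Rq. \<exists>v. P q v \<and> v ` T q \<subseteq> R"
  proof
    fix q assume "q \<in> Rq"
    then obtain j where j: "req j = q" unfolding req_def using from_nat_into_surj[OF cnt] by blast
    show "\<exists>v. P q v \<and> v ` T q \<subseteq> R"
      using wit[of j "bnd j"] j unfolding R_def Rj_def by blast
  qed
  ultimately show ?thesis by blast
qed

lemma part1:
  fixes g :: "tup \<Rightarrow> 'y option" and M :: "nat set"
  assumes fM: "finite M" and domg: "dom g \<subseteq> XN M"
  shows "\<exists>g' h. g' \<subseteq>\<^sub>m g \<and> hered_thrifty M g' \<and>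
             dom h \<subseteq> XN M \<and> ran h \<subseteq> XN M \<and>
             pvec_in_C I_ideal M h \<and> g = g' \<circ>\<^sub>m h"
proof -
  define Qs where "Qs S c u0 = {v\<in>dom g. g v = g u0 \<and> (\<forall>i\<in>S. v i = c i)}" for S and c u0 :: tup
  define Rq where "Rq = {(S,c,u0). S \<subseteq> M \<and> c \<in> XN S \<and> u0 \<in> dom g \<and>
      (\<forall>k. \<exists>v\<in>Qs S c u0. \<forall>i\<in>M-S. k \<le> snd (v i))}"
  have cntR: "countable Rq"
  proof (rule countable_subset)
    show "Rq \<subseteq> (SIGMA S:Pow M. XN S \<times> XN M)" unfolding Rq_def using domg by auto
    show "countable (SIGMA S:Pow M. XN S \<times> XN M)"
    proof (rule countable_SIGMA)
      show "countable (Pow M)" using fM by (simp add: countable_finite)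
      fix S assume "S \<in> Pow M"
      then have "finite S" using fM finite_subset by blast
      then show "countable (XN S \<times> XN M)" using countable_XN fM by blast
    qed
  qed
  obtain R where RI: "R \<in> I_ideal" and Rw: "\<forall>q\<in>Rq. \<exists>v. v \<in> Qs (fst q) (fst (snd q)) (snd (snd q)) \<and> v ` (M - fst q) \<subseteq> R"
  proof -
    have "\<exists>R\<in>I_ideal. \<forall>q\<in>Rq. \<exists>v. v \<in> Qs (fst q) (fst (snd q)) (snd (snd q)) \<and> v ` (M - fst q) \<subseteq> R"
    proof (rule witness_set[where m="card M"])
      show "countable Rq" by (rule cntR)
      show "\<forall>q\<in>Rq. finite (M - fst q) \<and> card (M - fst q) \<le> card M" using fM by (auto intro: card_mono)
      show "\<forall>q\<in>Rq. \<forall>N. \<exists>v. v \<in> Qs (fst q) (fst (snd q)) (snd (snd q)) \<and> (\<forall>i\<in>M - fst q. N \<le> snd (v i))"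
        unfolding Rq_def by fastforce
    qed
    then show ?thesis using that by blast
  qed
  have wR: "\<And>S c u0. S \<subseteq> M \<Longrightarrow> c \<in> XN S \<Longrightarrow> u0 \<in> dom g \<Longrightarrow>
      (\<forall>k. \<exists>v\<in>Qs S c u0. \<forall>i\<in>M-S. k \<le> snd (v i)) \<Longrightarrow> \<exists>w\<in>Qs S c u0. w ` (M - S) \<subseteq> R"
  proof -
    fix S c u0 assume a: "S \<subseteq> M" "c \<in> XN S" "u0 \<in> dom g" "\<forall>k. \<exists>v\<in>Qs S c u0. \<forall>i\<in>M-S. k \<le> snd (v i)"
    then have "(S,c,u0) \<in> Rq" unfolding Rq_def by blast
    from Rw[rule_format, OF this] show "\<exists>w\<in>Qs S c u0. w ` (M - S) \<subseteq> R" by auto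
  qed
  define key where "key v = v ` M - R" for v :: tup
  define minimal where "minimal D K = ((\<exists>v\<in>dom g. g v = D \<and> key v = K) \<and> \<not>(\<exists>v\<in>dom g. g v = D \<and> key v \<subset> K))" for D K
  have exmin: "\<And>u. u \<in> dom g \<Longrightarrow> \<exists>K. K \<subseteq> key u \<and> minimal (g u) K"
  proof -
    fix u assume u: "u \<in> dom g"
    define C where "C = {K. \<exists>v\<in>dom g. g v = g u \<and> key v = K \<and> K \<subseteq> key u}"
    have "key u \<in> C" unfolding C_def using u by blast
    then obtain n where "\<exists>K\<in>C. card K = n" by blast
    then obtain n0 where n0: "\<exists>K\<in>C. card K = n0" "\<And>n'. n' < n0 \<Longrightarrow> \<not>(\<exists>K\<in>C. card K = n')"
      using ex_least_nat_le[of "\<lambda>n. \<exists>K\<in>C. card K = n"] by (metis exists_least_iff)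
    then obtain K where K: "K \<in> C" "card K = n0" by blast
    have fk: "finite (key u)" unfolding key_def using fM by simp
    have "minimal (g u) K" unfolding minimal_def
    proof
      show "\<exists>v\<in>dom g. g v = g u \<and> key v = K" using K unfolding C_def by blast
      show "\<not>(\<exists>v\<in>dom g. g v = g u \<and> key v \<subset> K)"
      proof
        assume "\<exists>v\<in>dom g. g v = g u \<and> key v \<subset> K"
        then obtain v where v: "v \<in> dom g" "g v = g u" "key v \<subset> K" by blast
        have "K \<subseteq> key u" using K unfolding C_def by blast
        then have "key v \<in> C" unfolding C_def using v by blast
        moreover have "card (key v) < n0" using K v fk \<open>K \<subseteq> key u\<close>
          by (metis psubset_card_mono finite_subset)
        ultimately show False using n0(2) by blast
      qed
    qed
    moreover have "K \<subseteq> key u" using K unfolding C_def by blast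
    ultimately show "\<exists>K. K \<subseteq> key u \<and> minimal (g u) K" by blast
  qed
  define Kf where "Kf u = (SOME K. K \<subseteq> key u \<and> minimal (g u) K)" for u
  define pick where "pick D K = (SOME v. v \<in> dom g \<and> g v = D \<and> key v = K)" for D K
  have pickp: "\<And>D K. minimal D K \<Longrightarrow> pick D K \<in> dom g \<and> g (pick D K) = D \<and> key (pick D K) = K"
  proof -
    fix D K assume "minimal D K"
    then have ex: "\<exists>v. v \<in> dom g \<and> g v = D \<and> key v = K" unfolding minimal_def by blast
    show "pick D K \<in> dom g \<and> g (pick D K) = D \<and> key (pick D K) = K" unfolding pick_def by (rule someI_ex[OF ex])
  qed
  have Kfp: "\<And>u. u \<in> dom g \<Longrightarrow> Kf u \<subseteq> key u \<and> minimal (g u) (Kf u)"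
  proof -
    fix u assume "u \<in> dom g"
    from exmin[OF this] show "Kf u \<subseteq> key u \<and> minimal (g u) (Kf u)" unfolding Kf_def by (rule someI_ex)
  qed
  define rep where "rep u = pick (g u) (Kf u)" for u
  have repp: "\<And>u. u \<in> dom g \<Longrightarrow> rep u \<in> dom g \<and> g (rep u) = g u \<and> key (rep u) \<subseteq> key u
       \<and> minimal (g u) (key (rep u)) \<and> rep u = pick (g u) (key (rep u))"
    using Kfp pickp unfolding rep_def by metis
  define h where "h u = (if u \<in> dom g then Some (rep u) else None)" for u
  define E where "E = rep ` dom g"
  define g' where "g' = g |` E"
  have "g' \<subseteq>\<^sub>m g" unfolding g'_def map_le_def by (auto simp: restrict_map_def)
  moreover have "g = g' \<circ>\<^sub>m h"
  proof
    fix u show "g u = (g' \<circ>\<^sub>m h) u"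
    proof (cases "u \<in> dom g")
      case True
      then show ?thesis using repp[OF True] unfolding h_def g'_def E_def map_comp_def
        by (auto simp: restrict_map_def)
    next
      case False
      then show ?thesis unfolding h_def map_comp_def by (auto simp: domIff)
    qed
  qed
  moreover have "dom h \<subseteq> XN M" using domg unfolding h_def dom_def by auto
  moreover have "ran h \<subseteq> XN M"
  proof
    fix v assume "v \<in> ran h"
    then obtain u where u: "u \<in> dom g" "v = rep u" unfolding ran_def h_def by (auto split: if_splits)
    then show "v \<in> XN M" using repp[OF u(1)] domg by blast
  qed
  moreover have "pvec_in_C I_ideal M h"
    unfolding pvec_in_C_def pfun_in_C_def
  proof (intro ballI)
    fix i assume iM: "i \<in> M"
    define F where "F u = (if u \<in> dom g then rep u i else u i)" for u
    have "op_in_C I_ideal M F" unfolding op_in_C_def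
    proof
      fix A assume AI: "A \<in> I_ideal"
      have "F ` PiE M (\<lambda>_. A) \<subseteq> A \<union> R"
      proof
        fix p assume "p \<in> F ` PiE M (\<lambda>_. A)"
        then obtain u where u: "u \<in> PiE M (\<lambda>_. A)" "p = F u" by blast
        have uA: "u ` M \<subseteq> A" using u(1) by auto
        show "p \<in> A \<union> R"
        proof (cases "u \<in> dom g")
          case True
          have "rep u i \<in> key (rep u) \<or> rep u i \<in> R" unfolding key_def using iM by blast
          moreover have "key (rep u) \<subseteq> A" using repp[OF True] uA unfolding key_def by blast
          ultimately show ?thesis using u True unfolding F_def by auto
        next
          case False
          then show ?thesis using u iM uA unfolding F_def by auto
        qed
      qed
      then show "F ` PiE M (\<lambda>_. A) \<in> I_ideal" using I_union_sub AI RI by blast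
    qed
    moreover have "\<forall>u\<in>XN M. \<forall>y. map_option (\<lambda>v. v i) (h u) = Some y \<longrightarrow> F u = y"
      unfolding h_def F_def by auto
    ultimately show "\<exists>F. op_in_C I_ideal M F \<and> (\<forall>u\<in>XN M. \<forall>y. map_option (\<lambda>v. v i) (h u) = Some y \<longrightarrow> F u = y)"
      by blast
  qed
  moreover have "hered_thrifty M g'"
    unfolding hered_thrifty_def
  proof (intro allI impI)
    fix S c assume SM: "S \<subset> M" and cS: "c \<in> XN S"
    show "thrifty (M - S) (p_cup M g' S c)" unfolding thrifty_def
    proof
      fix d
      define mg where "mg z = (\<lambda>i. if i \<in> S then c i else z i)" for z :: tup
      define Z where "Z = {z. p_cup M g' S c z = Some d}"
      have Zc: "\<And>z. z \<in> Z \<longleftrightarrow> z \<in> XN (M - S) \<and> mg z \<in> E \<and> g (mg z) = Some d"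
        unfolding Z_def p_cup_def mg_def g'_def by (auto simp: restrict_map_def)
      have inj: "\<And>z z'. z \<in> XN (M - S) \<Longrightarrow> z' \<in> XN (M - S) \<Longrightarrow> mg z = mg z' \<Longrightarrow> z = z'"
      proof -
        fix z z' assume a: "z \<in> XN (M - S)" "z' \<in> XN (M - S)" "mg z = mg z'"
        show "z = z'"
        proof (rule PiE_ext[OF a(1)[unfolded XN_def] a(2)[unfolded XN_def]])
          fix i assume "i \<in> M - S"
          then show "z i = z' i" using fun_cong[OF a(3), of i] unfolding mg_def by auto
        qed
      qed
      show "bounded_set (M - S) {u. p_cup M g' S c u = Some d}"
        unfolding Z_def[symmetric] bounded_set_def
      proof (cases "Z = {}")
        case True then show "\<exists>k. Z \<subseteq> Bk (M - S) k" by blast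
      next
        case False
        then obtain z0 where z0: "z0 \<in> Z" by blast
        define u0 where "u0 = mg z0"
        have u0: "u0 \<in> E" "g u0 = Some d" using z0 Zc unfolding u0_def by auto
        have u0d: "u0 \<in> dom g" using u0 by blast
        have inQ: "\<And>z. z \<in> Z \<Longrightarrow> mg z \<in> Qs S c u0"
          using Zc u0 unfolding Qs_def mg_def by auto
        show "\<exists>k. Z \<subseteq> Bk (M - S) k"
        proof (cases "\<forall>k. \<exists>v\<in>Qs S c u0. \<forall>i\<in>M-S. k \<le> snd (v i)")
          case True
          obtain w where w: "w \<in> Qs S c u0" "w ` (M - S) \<subseteq> R"
            using wR[OF _ cS u0d True] SM by blast
          have same: "\<And>z. z \<in> Z \<Longrightarrow> mg z = pick (Some d) (key w)"
          proof -
            fix z assume zZ: "z \<in> Z"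
            have vE: "mg z \<in> E" and gv: "g (mg z) = Some d" using zZ Zc by auto
            obtain u where u: "u \<in> dom g" "mg z = rep u" using vE unfolding E_def by blast
            have gu: "g u = Some d" using repp[OF u(1)] u(2) gv by simp
            have mn: "minimal (Some d) (key (mg z))" and pk: "mg z = pick (Some d) (key (mg z))"
              using repp[OF u(1)] u(2) gu by auto
            have "key w \<subseteq> key (mg z)"
            proof
              fix p assume "p \<in> key w"
              then obtain i where i: "i \<in> M" "p = w i" "p \<notin> R" unfolding key_def by blast
              then have "i \<in> S" using w(2) by blast
              then have "p = mg z i" using w(1) i unfolding Qs_def mg_def by auto
              then show "p \<in> key (mg z)" using i unfolding key_def by blast
            qed
            moreover have "w \<in> dom g" "g w = Some d" using w(1) u0 unfolding Qs_def by auto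
            ultimately have "key w = key (mg z)" using mn unfolding minimal_def by blast
            then show "mg z = pick (Some d) (key w)" using pk by simp
          qed
          have "Z \<subseteq> {z0}"
          proof
            fix z assume zZ: "z \<in> Z"
            have "mg z = mg z0" using same[OF zZ] same[OF z0] by simp
            then show "z \<in> {z0}" using inj zZ z0 Zc by blast
          qed
          moreover obtain i0 where i0: "i0 \<in> M - S" using SM by blast
          moreover have "z0 \<in> XN (M - S)" using z0 Zc by blast
          ultimately have "Z \<subseteq> Bk (M - S) (Suc (snd (z0 i0)))" unfolding Bk_def by auto
          then show ?thesis by blast
        next
          case False
          then obtain k where k: "\<forall>v\<in>Qs S c u0. \<exists>i\<in>M-S. snd (v i) < k" by (auto simp: not_le)
          have "Z \<subseteq> Bk (M - S) k"
          proof
            fix z assume zZ: "z \<in> Z"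
            obtain i where i: "i \<in> M - S" "snd (mg z i) < k" using k inQ[OF zZ] by blast
            then have "snd (z i) < k" unfolding mg_def by auto
            then show "z \<in> Bk (M - S) k" using i zZ Zc unfolding Bk_def by blast
          qed
          then show ?thesis by blast
        qed
      qed
    qed
  qed
  ultimately show ?thesis by blast
qed

theorem mainTheorem8:
  shows
  "(\<forall>m (g :: tup \<Rightarrow> 'y option). dom g \<subseteq> XN (Mset m) \<longrightarrow>
      (\<exists>g' h. g' \<subseteq>\<^sub>m g \<and> hered_thrifty (Mset m) g' \<and>
             dom h \<subseteq> XN (Mset m) \<and> ran h \<subseteq> XN (Mset m) \<and>
             pvec_in_C I_ideal (Mset m) h \<and> g = g' \<circ>\<^sub>m h))
   \<and>
   (\<forall>m (g :: tup \<Rightarrow> pt option). dom g \<subseteq> XN (Mset m) \<longrightarrow> pfun_in_C J_ideal (Mset m) g \<longrightarrow>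
      (\<exists>g' h. g' \<subseteq>\<^sub>m g \<and> hered_thrifty (Mset m) g' \<and> pfun_in_C J_ideal (Mset m) g' \<and>
             dom h \<subseteq> XN (Mset m) \<and> ran h \<subseteq> XN (Mset m) \<and>
             pvec_in_C I_ideal (Mset m) h \<and> g = g' \<circ>\<^sub>m h))"
proof (intro conjI allI impI)
  fix m and g :: "tup \<Rightarrow> 'y option" assume "dom g \<subseteq> XN (Mset m)"
  then show "\<exists>g' h. g' \<subseteq>\<^sub>m g \<and> hered_thrifty (Mset m) g' \<and>
             dom h \<subseteq> XN (Mset m) \<and> ran h \<subseteq> XN (Mset m) \<and>
             pvec_in_C I_ideal (Mset m) h \<and> g = g' \<circ>\<^sub>m h"
    using part1[of "Mset m" g] unfolding Mset_def by simp
next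
  fix m and g :: "tup \<Rightarrow> pt option" assume d: "dom g \<subseteq> XN (Mset m)" and J: "pfun_in_C J_ideal (Mset m) g"
  obtain g' h where gh: "g' \<subseteq>\<^sub>m g" "hered_thrifty (Mset m) g'"
             "dom h \<subseteq> XN (Mset m)" "ran h \<subseteq> XN (Mset m)"
             "pvec_in_C I_ideal (Mset m) h" "g = g' \<circ>\<^sub>m h"
    using part1[of "Mset m" g] d unfolding Mset_def by auto
  have "pfun_in_C J_ideal (Mset m) g'"
  proof -
    obtain F where F: "op_in_C J_ideal (Mset m) F" "\<forall>u\<in>XN (Mset m). \<forall>y. g u = Some y \<longrightarrow> F u = y"
      using J unfolding pfun_in_C_def by blast
    have "\<forall>u\<in>XN (Mset m). \<forall>y. g' u = Some y \<longrightarrow> F u = y"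
      using F(2) gh(1) unfolding map_le_def by (metis domI)
    then show ?thesis using F(1) unfolding pfun_in_C_def by blast
  qed
  then show "\<exists>g' h. g' \<subseteq>\<^sub>m g \<and> hered_thrifty (Mset m) g' \<and> pfun_in_C J_ideal (Mset m) g' \<and>
             dom h \<subseteq> XN (Mset m) \<and> ran h \<subseteq> XN (Mset m) \<and>
             pvec_in_C I_ideal (Mset m) h \<and> g = g' \<circ>\<^sub>m h" using gh by blast
qed

end
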